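(* Let $(A,\succ_A,\prec_A)$ be an anti-pre-Leibniz algebra with sub-adjacent Leibniz algebra $(A,\circ_A)$. Define multiplications on $A\oplus A^*$ by $$(x+a^* )\circ_{1}(y+b^* )=x\circ_A y-\mathcal L^*_{\succ_A}(x)b^*+(\mathcal L^*_{\succ_A}+\mathcal R^*_{\prec_A})(y)a^*,$$ $$(x+a^* )\circ_{2}(y+b^* )=x\circ_A y+\mathcal L^*_{\circ_A}(x)b^*-(\mathcal L^*_{\circ_A}+\mathcal R^*_{\circ_A})(y)a^*,$$ for $x,y\in A$, $a^*,b^*\in A^*$. Then $(A\oplus A^*,\circ_1,\circ_2)$ is a compatible Leibniz algebra if and only if $(A,\succ_A,\prec_A)$ is an admissible Novikov dialgebra.
   Context: All vector spaces are finite-dimensional over a field $\mathbb K$ of characteristic zero. For a multiplication $\ast$, $\mathcal L_\ast(x)y=x\ast y$, $\mathcal R_\ast(x)y=y\ast x$; for $f:A\to\mathrm{End}(V)$, $f^*:A\to\mathrm{End}(V^* )$ is $\langle f^*(x)u^*,v\rangle=-\langle u^*,f(x)v\rangle$. A Leibniz algebra is a vector space with multiplication $\circ$ satisfying $x\circ(y\circ z)=(x\circ y)\circ z+y\circ(x\circ z)$. A compatible Leibniz algebra is $(B,\circ_1,\circ_2)$ with both $(B,\circ_1),(B,\circ_2)$ Leibniz algebras and, for all $x,y,z$: $x\circ_2(y\circ_1 z)+x\circ_1(y\circ_2 z)-(x\circ_1 y)\circ_2 z-(x\circ_2 y)\circ_1 z-y\circ_2(x\circ_1 z)-y\circ_1(x\circ_2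 z)=0$. For multiplications $\succ_A,\prec_A$ set $x\circ_A y=x\succ_A y+x\prec_A y$. Identities for all $x,y,z$: (AL1) $(x\circ_A y)\prec_A z=x\succ_A(y\circ_A z)-y\succ_A(x\circ_A z)$; (AL2) $(x\circ_A y)\succ_A z=y\succ_A(x\succ_A z)-x\succ_A(y\succ_A z)$; (AL3) $x\prec_A(y\circ_A z)=(y\succ_A x)\prec_A z-y\succ_A(x\prec_A z)$; (AL4) $(x\succ_A y)\prec_A z=-(y\prec_A x)\prec_A z$; (AN1) $(x\succ_A y)\succ_A z=-(y\prec_A x)\succ_A z$; (AN2) $x\prec_A(y\prec_A z)-y\prec_A(x\prec_A z)=2(x\prec_A y)\prec_A z-2(y\prec_A x)\prec_A z$; (AN3) $(x\succ_A y)\succ_A z+y\prec_A(x\succ_A z)=2x\succ_A(y\circ_A z)$. An anti-pre-Leibniz algebra satisfies (AL1)–(AL4), and its sub-adjacent Leibniz algebra is $(A,\circ_A)$; an admissible Novikov dialgebra satisfies (AL2)–(AL4) and (AN1)–(AN3). *)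

theory Defs
  imports Main "HOL-Library.Function_Algebras" "HOL-Library.Product_Plus"
begin

text \<open>Convention: the finite-dimensional space A over the field 'k (char 0) is realised
  in coordinates as 'n \<Rightarrow> 'k for a finite index type 'n (a fixed basis).
  The dual space A* is realised as 'n \<Rightarrow> 'k too, via the nondegenerate pairing
  pair a v = (sum over i of a i * v i).\<close>

type_synonym ('k,'n) vect = "'n \<Rightarrow> 'k"

definition smul :: "'k::field \<Rightarrow> ('k,'n) vect \<Rightarrow> ('k,'n) vect" where
  "smul c v = (\<lambda>i. c * v i)"

definition pair :: "('k::field,'n::finite) vect \<Rightarrow> ('k,'n) vect \<Rightarrow> 'k" where
  "pair a v = (\<Sum>i\<in>UNIV. a i * v i)"

definition bvec :: "'n \<Rightarrow> ('k::field,'n) vect" where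
  "bvec j = (\<lambda>i. if i = j then 1 else 0)"

definition bilinear_mult :: "(('k::field,'n) vect \<Rightarrow> ('k,'n) vect \<Rightarrow> ('k,'n) vect) \<Rightarrow> bool" where
  "bilinear_mult m \<longleftrightarrow>
     (\<forall>x y z. m (x + y) z = m x z + m y z) \<and>
     (\<forall>x y z. m x (y + z) = m x y + m x z) \<and>
     (\<forall>c x y. m (smul c x) y = smul c (m x y)) \<and>
     (\<forall>c x y. m x (smul c y) = smul c (m x y))"

text \<open>Dual map: for linear f on A, dual_op f is the map on A* with
  pair (dual_op f a) v = - pair a (f v).\<close>
definition dual_op :: "(('k::field,'n::finite) vect \<Rightarrow> ('k,'n) vect) \<Rightarrow> ('k,'n) vect \<Rightarrow> ('k,'n) vect" where
  "dual_op f a = (\<lambda>j. - (\<Sum>k\<in>UNIV. a k * f (bvec j) k))"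

definition Lm :: "('v \<Rightarrow> 'v \<Rightarrow> 'v) \<Rightarrow> 'v \<Rightarrow> 'v \<Rightarrow> 'v" where
  "Lm m x = (\<lambda>y. m x y)"

definition Rm :: "('v \<Rightarrow> 'v \<Rightarrow> 'v) \<Rightarrow> 'v \<Rightarrow> 'v \<Rightarrow> 'v" where
  "Rm m x = (\<lambda>y. m y x)"

definition circ :: "('v \<Rightarrow> 'v \<Rightarrow> 'v::plus) \<Rightarrow> ('v \<Rightarrow> 'v \<Rightarrow> 'v) \<Rightarrow> 'v \<Rightarrow> 'v \<Rightarrow> 'v" where
  "circ s p x y = s x y + p x y"

definition leibniz :: "('v \<Rightarrow> 'v \<Rightarrow> 'v::ab_group_add) \<Rightarrow> bool" where
  "leibniz m \<longleftrightarrow> (\<forall>x y z. m x (m y z) = m (m x y) z + m y (m x z))"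

definition compatible_leibniz :: "('v \<Rightarrow> 'v \<Rightarrow> 'v::ab_group_add) \<Rightarrow> ('v \<Rightarrow> 'v \<Rightarrow> 'v) \<Rightarrow> bool" where
  "compatible_leibniz m1 m2 \<longleftrightarrow> leibniz m1 \<and> leibniz m2 \<and>
     (\<forall>x y z. m2 x (m1 y z) + m1 x (m2 y z) - m2 (m1 x y) z - m1 (m2 x y) z
               - m2 y (m1 x z) - m1 y (m2 x z) = 0)"

definition AL1 :: "('v \<Rightarrow> 'v \<Rightarrow> 'v::ab_group_add) \<Rightarrow> ('v \<Rightarrow> 'v \<Rightarrow> 'v) \<Rightarrow> bool" where
  "AL1 s p \<longleftrightarrow> (\<forall>x y z. p (circ s p x y) z = s x (circ s p y z) - s y (circ s p x z))"

definition AL2 :: "('v \<Rightarrow> 'v \<Rightarrow> 'v::ab_group_add) \<Rightarrow> ('v \<Rightarrow> 'v \<Rightarrow> 'v) \<Rightarrow> bool" where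
  "AL2 s p \<longleftrightarrow> (\<forall>x y z. s (circ s p x y) z = s y (s x z) - s x (s y z))"

definition AL3 :: "('v \<Rightarrow> 'v \<Rightarrow> 'v::ab_group_add) \<Rightarrow> ('v \<Rightarrow> 'v \<Rightarrow> 'v) \<Rightarrow> bool" where
  "AL3 s p \<longleftrightarrow> (\<forall>x y z. p x (circ s p y z) = p (s y x) z - s y (p x z))"

definition AL4 :: "('v \<Rightarrow> 'v \<Rightarrow> 'v::ab_group_add) \<Rightarrow> ('v \<Rightarrow> 'v \<Rightarrow> 'v) \<Rightarrow> bool" where
  "AL4 s p \<longleftrightarrow> (\<forall>x y z. p (s x y) z = - p (p y x) z)"

definition AN1 :: "('v \<Rightarrow> 'v \<Rightarrow> 'v::ab_group_add) \<Rightarrow> ('v \<Rightarrow> 'v \<Rightarrow> 'v) \<Rightarrow> bool" where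
  "AN1 s p \<longleftrightarrow> (\<forall>x y z. s (s x y) z = - s (p y x) z)"

text \<open>The factor 2 is written as doubling (v + v).\<close>
definition AN2 :: "('v \<Rightarrow> 'v \<Rightarrow> 'v::ab_group_add) \<Rightarrow> ('v \<Rightarrow> 'v \<Rightarrow> 'v) \<Rightarrow> bool" where
  "AN2 s p \<longleftrightarrow> (\<forall>x y z. p x (p y z) - p y (p x z) =
      (p (p x y) z - p (p y x) z) + (p (p x y) z - p (p y x) z))"

definition AN3 :: "('v \<Rightarrow> 'v \<Rightarrow> 'v::ab_group_add) \<Rightarrow> ('v \<Rightarrow> 'v \<Rightarrow> 'v) \<Rightarrow> bool" where
  "AN3 s p \<longleftrightarrow> (\<forall>x y z. s (s x y) z + p y (s x z) = s x (circ s p y z) + s x (circ s p y z))"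

definition anti_pre_leibniz :: "(('k::field,'n) vect \<Rightarrow> ('k,'n) vect \<Rightarrow> ('k,'n) vect) \<Rightarrow> (('k,'n) vect \<Rightarrow> ('k,'n) vect \<Rightarrow> ('k,'n) vect) \<Rightarrow> bool" where
  "anti_pre_leibniz s p \<longleftrightarrow> bilinear_mult s \<and> bilinear_mult p \<and>
     AL1 s p \<and> AL2 s p \<and> AL3 s p \<and> AL4 s p"

definition admissible_novikov_dialgebra :: "(('k::field,'n) vect \<Rightarrow> ('k,'n) vect \<Rightarrow> ('k,'n) vect) \<Rightarrow> (('k,'n) vect \<Rightarrow> ('k,'n) vect \<Rightarrow> ('k,'n) vect) \<Rightarrow> bool" where
  "admissible_novikov_dialgebra s p \<longleftrightarrow> bilinear_mult s \<and> bilinear_mult p \<and>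
     AL2 s p \<and> AL3 s p \<and> AL4 s p \<and> AN1 s p \<and> AN2 s p \<and> AN3 s p"

definition circ1 :: "(('k::field,'n::finite) vect \<Rightarrow> ('k,'n) vect \<Rightarrow> ('k,'n) vect) \<Rightarrow> (('k,'n) vect \<Rightarrow> ('k,'n) vect \<Rightarrow> ('k,'n) vect)
     \<Rightarrow> ('k,'n) vect \<times> ('k,'n) vect \<Rightarrow> ('k,'n) vect \<times> ('k,'n) vect \<Rightarrow> ('k,'n) vect \<times> ('k,'n) vect" where
  "circ1 s p u w = (case u of (x, a) \<Rightarrow> case w of (y, b) \<Rightarrow>
     (circ s p x y,
      - dual_op (Lm s x) b + (dual_op (Lm s y) a + dual_op (Rm p y) a)))"

definition circ2 :: "(('k::field,'n::finite) vect \<Rightarrow> ('k,'n) vect \<Rightarrow> ('k,'n) vect) \<Rightarrow> (('k,'n) vect \<Rightarrow> ('k,'n) vect \<Rightarrow> ('k,'n) vect)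
     \<Rightarrow> ('k,'n) vect \<times> ('k,'n) vect \<Rightarrow> ('k,'n) vect \<times> ('k,'n) vect \<Rightarrow> ('k,'n) vect \<times> ('k,'n) vect" where
  "circ2 s p u w = (case u of (x, a) \<Rightarrow> case w of (y, b) \<Rightarrow>
     (circ s p x y,
      dual_op (Lm (circ s p) x) b - (dual_op (Lm (circ s p) y) a + dual_op (Rm (circ s p) y) a)))"

end

theory Submission
  imports Defs
begin

lemma sum_fun_apply: "finite A \<Longrightarrow> (\<Sum>j\<in>A. (f j :: 'a \<Rightarrow> 'b::comm_monoid_add)) i = (\<Sum>j\<in>A. f j i)"
  by (induction A rule: finite_induct) auto

lemma pair_add1 [simp]: "pair (a + b) v = pair a v + pair b v"
  by (simp add: pair_def distrib_right sum.distrib)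
lemma pair_add2 [simp]: "pair a (v + w) = pair a v + pair a w"
  by (simp add: pair_def distrib_left sum.distrib)
lemma pair_uminus1 [simp]: "pair (- a) v = - pair a v"
  by (simp add: pair_def sum_negf)
lemma pair_uminus2 [simp]: "pair a (- v) = - pair a v"
  by (simp add: pair_def sum_negf)
lemma pair_diff1 [simp]: "pair (a - b) v = pair a v - pair b v"
  by (simp add: pair_def left_diff_distrib sum_subtractf)
lemma pair_diff2 [simp]: "pair a (v - w) = pair a v - pair a w"
  by (simp add: pair_def right_diff_distrib sum_subtractf)
lemma pair_zero1 [simp]: "pair 0 v = 0"
  by (simp add: pair_def)
lemma pair_bvec2: "pair a (bvec j) = a j"
proof -
  have "pair a (bvec j) = (\<Sum>i\<in>UNIV. if i = j then a i else 0)"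
    unfolding pair_def by (rule sum.cong) (auto simp: bvec_def)
  then show ?thesis by simp
qed
lemma pair_bvec1: "pair (bvec j) v = v j"
proof -
  have "pair (bvec j) v = (\<Sum>i\<in>UNIV. if i = j then v i else 0)"
    unfolding pair_def by (rule sum.cong) (auto simp: bvec_def)
  then show ?thesis by simp
qed

lemma dual_ext: "(\<And>v. pair \<alpha> v = pair \<beta> v) \<Longrightarrow> \<alpha> = \<beta>"
  by (rule ext) (metis pair_bvec2)
lemma vec_ext: "(\<And>a. pair a x = pair a y) \<Longrightarrow> x = y"
  by (rule ext) (metis pair_bvec1)

definition lin :: "(('k::field,'n) vect \<Rightarrow> ('k,'n) vect) \<Rightarrow> bool" where
  "lin f \<longleftrightarrow> (\<forall>x y. f (x + y) = f x + f y) \<and> (\<forall>c x. f (smul c x) = smul c (f x))"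

lemma decomp: "(v::('k::field,'n::finite) vect) = (\<Sum>j\<in>UNIV. smul (v j) (bvec j))"
proof (rule ext)
  fix i
  have "(\<Sum>j\<in>UNIV. smul (v j) (bvec j)) i = (\<Sum>j\<in>UNIV. v j * bvec j i)"
    by (simp add: sum_fun_apply smul_def)
  also have "\<dots> = (\<Sum>j\<in>UNIV. if j = i then v j else 0)"
    by (rule sum.cong) (auto simp: bvec_def)
  also have "\<dots> = v i" by simp
  finally show "v i = (\<Sum>j\<in>UNIV. smul (v j) (bvec j)) i" by simp
qed

lemma lin_zero: "lin f \<Longrightarrow> f 0 = 0"
  unfolding lin_def by (metis add_cancel_right_right add_0)

lemma lin_sum: assumes "lin f" "finite A" shows "f (\<Sum>j\<in>A. g j) = (\<Sum>j\<in>A. f (g j))"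
  using assms(2)
proof (induction A rule: finite_induct)
  case empty
  then show ?case using lin_zero[OF assms(1)] by (simp only: sum.empty)
next
  case (insert x F)
  have "f (sum g (insert x F)) = f (g x + sum g F)" by (simp only: sum.insert[OF insert.hyps])
  also have "\<dots> = f (g x) + f (sum g F)" using assms(1) unfolding lin_def by blast
  also have "\<dots> = f (g x) + (\<Sum>j\<in>F. f (g j))" by (simp only: insert.IH)
  also have "\<dots> = (\<Sum>j\<in>insert x F. f (g j))" by (simp only: sum.insert[OF insert.hyps])
  finally show ?case .
qed

lemma pair_dual:
  fixes f :: "('k::field,'n::finite) vect \<Rightarrow> ('k,'n) vect"
  assumes "lin f"
  shows "pair (dual_op f a) v = - pair a (f v)"
proof -
  have "f v = f (\<Sum>j\<in>UNIV. smul (v j) (bvec j))"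
    by (rule arg_cong[where f=f], rule decomp)
  also have "\<dots> = (\<Sum>j\<in>UNIV. f (smul (v j) (bvec j)))"
    by (rule lin_sum[OF assms finite_UNIV])
  also have "\<dots> = (\<Sum>j\<in>UNIV. smul (v j) (f (bvec j)))"
    using assms by (simp add: lin_def)
  finally have fv: "f v = (\<Sum>j\<in>UNIV. smul (v j) (f (bvec j)))" .
  have "pair a (f v) = (\<Sum>k\<in>UNIV. a k * (\<Sum>j\<in>UNIV. v j * f (bvec j) k))"
    unfolding pair_def fv by (simp add: sum_fun_apply smul_def)
  also have "\<dots> = (\<Sum>k\<in>UNIV. \<Sum>j\<in>UNIV. a k * f (bvec j) k * v j)"
    by (simp add: sum_distrib_left mult_ac)
  also have "\<dots> = (\<Sum>j\<in>UNIV. \<Sum>k\<in>UNIV. a k * f (bvec j) k * v j)"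
    by (rule sum.swap)
  also have "\<dots> = (\<Sum>j\<in>UNIV. (\<Sum>k\<in>UNIV. a k * f (bvec j) k) * v j)"
    by (simp add: sum_distrib_right)
  finally show ?thesis
    by (simp add: pair_def dual_op_def sum_negf)
qed


lemma pair_numeral [simp]: "pair a (numeral k * w) = numeral k * pair a w"
  by (simp add: pair_def sum_distrib_left mult_ac)
lemma bl_add1: "bilinear_mult m \<Longrightarrow> m (x + y) z = m x z + m y z"
  by (simp add: bilinear_mult_def)
lemma bl_add2: "bilinear_mult m \<Longrightarrow> m x (y + z) = m x y + m x z"
  by (simp add: bilinear_mult_def)
lemma bl_zero1: "bilinear_mult m \<Longrightarrow> m 0 z = 0"
  using bl_add1[of m 0 0 z] by simp
lemma bl_zero2: "bilinear_mult m \<Longrightarrow> m z 0 = 0"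
  using bl_add2[of m z 0 0] by simp
lemma bl_neg1: "bilinear_mult m \<Longrightarrow> m (- x) z = - m x z"
  using bl_add1[of m "- x" x z] bl_zero1[of m z] by (simp add: eq_neg_iff_add_eq_0)
lemma bl_neg2: "bilinear_mult m \<Longrightarrow> m z (- x) = - m z x"
  using bl_add2[of m z "- x" x] bl_zero2[of m z] by (simp add: eq_neg_iff_add_eq_0)
lemma bl_diff1: "bilinear_mult m \<Longrightarrow> m (x - y) z = m x z - m y z"
  by (simp only: diff_conv_add_uminus bl_add1 bl_neg1)
lemma bl_diff2: "bilinear_mult m \<Longrightarrow> m z (x - y) = m z x - m z y"
  by (simp only: diff_conv_add_uminus bl_add2 bl_neg2)

lemma lin_L: "bilinear_mult m \<Longrightarrow> lin (Lm m x)"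
  by (simp add: bilinear_mult_def lin_def Lm_def)
lemma lin_R: "bilinear_mult m \<Longrightarrow> lin (Rm m x)"
  by (simp add: bilinear_mult_def lin_def Rm_def)

lemma smul_add: "smul c (a + b) = smul c a + smul c b"
  by (simp add: smul_def fun_eq_iff distrib_left)

lemma bilinear_circ: "bilinear_mult s \<Longrightarrow> bilinear_mult p \<Longrightarrow> bilinear_mult (circ s p)"
  by (simp add: bilinear_mult_def circ_def smul_add add_ac)

lemma pdL: assumes "bilinear_mult m" shows "pair (dual_op (Lm m x) a) v = - pair a (m x v)"
  using pair_dual[OF lin_L[OF assms]] by (simp add: Lm_def)
lemma pdR: assumes "bilinear_mult m" shows "pair (dual_op (Rm m x) a) v = - pair a (m v x)"
  using pair_dual[OF lin_R[OF assms]] by (simp add: Rm_def)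

definition Dt :: "('v \<Rightarrow> 'v \<Rightarrow> 'v::ab_group_add) \<Rightarrow> ('v \<Rightarrow> 'v \<Rightarrow> 'v) \<Rightarrow> 'v \<Rightarrow> 'v \<Rightarrow> 'v \<Rightarrow> 'v" where
  "Dt s p x y v = (p (x) (s (y) (v))) - (p (y) (s (x) (v))) + (p (p (x) (y)) (v)) + (p (s (x) (y)) (v)) + (s (x) (p (y) (v))) + (s (x) (s (y) (v))) + (s (x) (s (y) (v))) - (s (y) (p (x) (v))) - (s (y) (s (x) (v))) - (s (y) (s (x) (v)))"

definition Bt :: "('v \<Rightarrow> 'v \<Rightarrow> 'v::ab_group_add) \<Rightarrow> ('v \<Rightarrow> 'v \<Rightarrow> 'v) \<Rightarrow> 'v \<Rightarrow> 'v \<Rightarrow> 'v \<Rightarrow> 'v" where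
  "Bt s p x z v = - (p (x) (p (v) (z))) - (p (x) (s (z) (v))) + (p (z) (s (x) (v))) + (p (p (x) (v)) (z)) - (p (p (x) (z)) (v)) + (p (s (x) (v)) (z)) + (p (s (x) (v)) (z)) - (p (s (x) (z)) (v)) - (s (v) (p (x) (z))) - (s (v) (s (x) (z))) - (s (x) (p (v) (z))) - (s (x) (p (v) (z))) - (s (x) (p (z) (v))) - (s (x) (s (v) (z))) - (s (x) (s (z) (v))) - (s (x) (s (z) (v))) + (s (z) (p (x) (v))) + (s (z) (s (x) (v))) + (s (z) (s (x) (v))) + (s (s (x) (v)) (z))"

definition At :: "('v \<Rightarrow> 'v \<Rightarrow> 'v::ab_group_add) \<Rightarrow> ('v \<Rightarrow> 'v \<Rightarrow> 'v) \<Rightarrow> 'v \<Rightarrow> 'v \<Rightarrow> 'v \<Rightarrow> 'v" where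
  "At s p y z v = (p (y) (p (v) (z))) + (p (y) (s (z) (v))) - (p (z) (s (y) (v))) + (p (p (v) (z)) (y)) + (p (p (v) (z)) (y)) - (p (p (y) (v)) (z)) + (p (p (y) (z)) (v)) + (p (p (z) (v)) (y)) + (p (s (v) (z)) (y)) - (p (s (y) (v)) (z)) - (p (s (y) (v)) (z)) + (p (s (y) (z)) (v)) + (p (s (z) (v)) (y)) + (p (s (z) (v)) (y)) + (s (v) (p (y) (z))) + (s (v) (s (y) (z))) + (s (y) (p (v) (z))) + (s (y) (p (v) (z))) + (s (y) (p (z) (v))) + (s (y) (s (v) (z))) + (s (y) (s (z) (v))) + (s (y) (s (z) (v))) - (s (z) (p (y) (v))) - (s (z) (s (y) (v))) - (s (z) (s (y) (v))) + (s (p (v) (z)) (y)) - (s (s (y) (v)) (z)) + (s (s (z) (v)) (y))"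

definition L1d :: "('v \<Rightarrow> 'v \<Rightarrow> 'v::ab_group_add) \<Rightarrow> ('v \<Rightarrow> 'v \<Rightarrow> 'v) \<Rightarrow> 'v \<Rightarrow> 'v \<Rightarrow> 'v \<Rightarrow> 'v" where
  "L1d s p x y v = - (s (x) (s (y) (v))) + (s (y) (s (x) (v))) - (s (p (x) (y)) (v)) - (s (s (x) (y)) (v))"

definition L1b :: "('v \<Rightarrow> 'v \<Rightarrow> 'v::ab_group_add) \<Rightarrow> ('v \<Rightarrow> 'v \<Rightarrow> 'v) \<Rightarrow> 'v \<Rightarrow> 'v \<Rightarrow> 'v \<Rightarrow> 'v" where
  "L1b s p x z v = (p (v) (p (x) (z))) + (p (v) (s (x) (z))) - (p (s (x) (v)) (z)) + (s (x) (p (v) (z))) + (s (x) (s (z) (v))) - (s (z) (s (x) (v))) + (s (p (x) (z)) (v)) + (s (s (x) (z)) (v))"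

definition L1a :: "('v \<Rightarrow> 'v \<Rightarrow> 'v::ab_group_add) \<Rightarrow> ('v \<Rightarrow> 'v \<Rightarrow> 'v) \<Rightarrow> 'v \<Rightarrow> 'v \<Rightarrow> 'v \<Rightarrow> 'v" where
  "L1a s p y z v = - (p (v) (p (y) (z))) - (p (v) (s (y) (z))) - (p (p (v) (z)) (y)) + (p (s (y) (v)) (z)) - (p (s (z) (v)) (y)) - (s (y) (p (v) (z))) - (s (y) (s (z) (v))) + (s (z) (s (y) (v))) - (s (p (y) (z)) (v)) - (s (s (y) (z)) (v))"

definition L2d :: "('v \<Rightarrow> 'v \<Rightarrow> 'v::ab_group_add) \<Rightarrow> ('v \<Rightarrow> 'v \<Rightarrow> 'v) \<Rightarrow> 'v \<Rightarrow> 'v \<Rightarrow> 'v \<Rightarrow> 'v" where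
  "L2d s p x y v = - (p (x) (p (y) (v))) - (p (x) (s (y) (v))) + (p (y) (p (x) (v))) + (p (y) (s (x) (v))) + (p (p (x) (y)) (v)) + (p (s (x) (y)) (v)) - (s (x) (p (y) (v))) - (s (x) (s (y) (v))) + (s (y) (p (x) (v))) + (s (y) (s (x) (v))) + (s (p (x) (y)) (v)) + (s (s (x) (y)) (v))"

definition L2b :: "('v \<Rightarrow> 'v \<Rightarrow> 'v::ab_group_add) \<Rightarrow> ('v \<Rightarrow> 'v \<Rightarrow> 'v) \<Rightarrow> 'v \<Rightarrow> 'v \<Rightarrow> 'v \<Rightarrow> 'v" where
  "L2b s p x z v = - (p (v) (p (x) (z))) - (p (v) (s (x) (z))) + (p (x) (p (v) (z))) + (p (x) (p (z) (v))) + (p (x) (s (v) (z))) + (p (x) (s (z) (v))) - (p (z) (p (x) (v))) - (p (z) (s (x) (v))) - (p (p (x) (v)) (z)) - (p (p (x) (z)) (v)) - (p (s (x) (v)) (z)) - (p (s (x) (z)) (v)) - (s (v) (p (x) (z))) - (s (v) (s (x) (z))) + (s (x) (p (v) (z))) + (s (x) (p (z) (v))) + (s (x) (s (v) (z))) + (s (x) (s (z) (v))) - (s (z) (p (x) (v))) - (s (z) (s (x) (v))) - (s (p (x) (v)) (z)) - (s (p (x) (z)) (v)) - (s (s (x) (v)) (z)) - (s (s (x) (z)) (v))"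

definition L2a :: "('v \<Rightarrow> 'v \<Rightarrow> 'v::ab_group_add) \<Rightarrow> ('v \<Rightarrow> 'v \<Rightarrow> 'v) \<Rightarrow> 'v \<Rightarrow> 'v \<Rightarrow> 'v \<Rightarrow> 'v" where
  "L2a s p y z v = (p (v) (p (y) (z))) + (p (v) (s (y) (z))) - (p (y) (p (v) (z))) - (p (y) (p (z) (v))) - (p (y) (s (v) (z))) - (p (y) (s (z) (v))) + (p (z) (p (y) (v))) + (p (z) (s (y) (v))) - (p (p (v) (z)) (y)) + (p (p (y) (v)) (z)) + (p (p (y) (z)) (v)) - (p (p (z) (v)) (y)) - (p (s (v) (z)) (y)) + (p (s (y) (v)) (z)) + (p (s (y) (z)) (v)) - (p (s (z) (v)) (y)) + (s (v) (p (y) (z))) + (s (v) (s (y) (z))) - (s (y) (p (v) (z))) - (s (y) (p (z) (v))) - (s (y) (s (v) (z))) - (s (y) (s (z) (v))) + (s (z) (p (y) (v))) + (s (z) (s (y) (v))) - (s (p (v) (z)) (y)) + (s (p (y) (v)) (z)) + (s (p (y) (z)) (v)) - (s (p (z) (v)) (y)) - (s (s (v) (z)) (y)) + (s (s (y) (v)) (z)) + (s (s (y) (z)) (v)) - (s (s (z) (v)) (y))"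

definition Lc :: "('v \<Rightarrow> 'v \<Rightarrow> 'v::ab_group_add) \<Rightarrow> ('v \<Rightarrow> 'v \<Rightarrow> 'v) \<Rightarrow> 'v \<Rightarrow> 'v \<Rightarrow> 'v \<Rightarrow> 'v" where
  "Lc s p x y z = (p (x) (p (y) (z))) + (p (x) (s (y) (z))) - (p (y) (p (x) (z))) - (p (y) (s (x) (z))) - (p (p (x) (y)) (z)) - (p (s (x) (y)) (z)) + (s (x) (p (y) (z))) + (s (x) (s (y) (z))) - (s (y) (p (x) (z))) - (s (y) (s (x) (z))) - (s (p (x) (y)) (z)) - (s (s (x) (y)) (z))"
definition al1 :: "('v \<Rightarrow> 'v \<Rightarrow> 'v::ab_group_add) \<Rightarrow> ('v \<Rightarrow> 'v \<Rightarrow> 'v) \<Rightarrow> 'v \<Rightarrow> 'v \<Rightarrow> 'v \<Rightarrow> 'v" where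
  "al1 s p x y z = p (circ s p x y) z - (s x (circ s p y z) - s y (circ s p x z))"
definition al2 :: "('v \<Rightarrow> 'v \<Rightarrow> 'v::ab_group_add) \<Rightarrow> ('v \<Rightarrow> 'v \<Rightarrow> 'v) \<Rightarrow> 'v \<Rightarrow> 'v \<Rightarrow> 'v \<Rightarrow> 'v" where
  "al2 s p x y z = s (circ s p x y) z - (s y (s x z) - s x (s y z))"
definition al3 :: "('v \<Rightarrow> 'v \<Rightarrow> 'v::ab_group_add) \<Rightarrow> ('v \<Rightarrow> 'v \<Rightarrow> 'v) \<Rightarrow> 'v \<Rightarrow> 'v \<Rightarrow> 'v \<Rightarrow> 'v" where
  "al3 s p x y z = p x (circ s p y z) - (p (s y x) z - s y (p x z))"
definition al4 :: "('v \<Rightarrow> 'v \<Rightarrow> 'v::ab_group_add) \<Rightarrow> ('v \<Rightarrow> 'v \<Rightarrow> 'v) \<Rightarrow> 'v \<Rightarrow> 'v \<Rightarrow> 'v \<Rightarrow> 'v" where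
  "al4 s p x y z = p (s x y) z - (- p (p y x) z)"
definition an1 :: "('v \<Rightarrow> 'v \<Rightarrow> 'v::ab_group_add) \<Rightarrow> ('v \<Rightarrow> 'v \<Rightarrow> 'v) \<Rightarrow> 'v \<Rightarrow> 'v \<Rightarrow> 'v \<Rightarrow> 'v" where
  "an1 s p x y z = s (s x y) z - (- s (p y x) z)"
definition an2 :: "('v \<Rightarrow> 'v \<Rightarrow> 'v::ab_group_add) \<Rightarrow> ('v \<Rightarrow> 'v \<Rightarrow> 'v) \<Rightarrow> 'v \<Rightarrow> 'v \<Rightarrow> 'v \<Rightarrow> 'v" where
  "an2 s p x y z = (p x (p y z) - p y (p x z)) - ((p (p x y) z - p (p y x) z) + (p (p x y) z - p (p y x) z))"
definition an3 :: "('v \<Rightarrow> 'v \<Rightarrow> 'v::ab_group_add) \<Rightarrow> ('v \<Rightarrow> 'v \<Rightarrow> 'v) \<Rightarrow> 'v \<Rightarrow> 'v \<Rightarrow> 'v \<Rightarrow> 'v" where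
  "an3 s p x y z = (s (s x y) z + p y (s x z)) - (s x (circ s p y z) + s x (circ s p y z))"

lemmas expdefs = Dt_def Bt_def At_def L1d_def L1b_def L1a_def L2d_def L2b_def L2a_def Lc_def
  al1_def al2_def al3_def al4_def an1_def an2_def an3_def

locale bil =
  fixes s p :: "('k::field,'n::finite) vect \<Rightarrow> ('k,'n) vect \<Rightarrow> ('k,'n) vect"
  assumes bs: "bilinear_mult s" and bp: "bilinear_mult p"
begin

lemmas bil_simps = bl_add1[OF bs] bl_add2[OF bs] bl_neg1[OF bs] bl_neg2[OF bs]
  bl_diff1[OF bs] bl_diff2[OF bs] bl_zero1[OF bs] bl_zero2[OF bs]
  bl_add1[OF bp] bl_add2[OF bp] bl_neg1[OF bp] bl_neg2[OF bp]
  bl_diff1[OF bp] bl_diff2[OF bp] bl_zero1[OF bp] bl_zero2[OF bp]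

lemma bc: "bilinear_mult (circ s p)"
  using bilinear_circ[OF bs bp] .

lemmas pd_simps = pdL[OF bs] pdR[OF bp] pdL[OF bc] pdR[OF bc]

lemma an_zero:
  assumes "AN1 s p" "AN2 s p" "AN3 s p"
  shows "an1 s p x y z = 0" "an2 s p x y z = 0" "an3 s p x y z = 0"
  using assms unfolding AN1_def AN2_def AN3_def an1_def an2_def an3_def right_minus_eq
  by (simp_all add: eq_neg_iff_add_eq_0)

lemma an_intro:
  assumes "\<And>x y z. an1 s p x y z = 0" "\<And>x y z. an2 s p x y z = 0" "\<And>x y z. an3 s p x y z = 0"
  shows "AN1 s p" "AN2 s p" "AN3 s p"
  using assms unfolding AN1_def AN2_def AN3_def an1_def an2_def an3_def right_minus_eq
  by (simp_all add: eq_neg_iff_add_eq_0)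

lemma cp_snd:
  "pair (snd (circ2 s p (x,a) (circ1 s p (y,b) (z,d)) + circ1 s p (x,a) (circ2 s p (y,b) (z,d))
     - circ2 s p (circ1 s p (x,a) (y,b)) (z,d) - circ1 s p (circ2 s p (x,a) (y,b)) (z,d)
     - circ2 s p (y,b) (circ1 s p (x,a) (z,d)) - circ1 s p (y,b) (circ2 s p (x,a) (z,d)))) v
   = pair d (Dt s p x y v) + pair b (Bt s p x z v) + pair a (At s p y z v)"
  by (simp add: circ1_def circ2_def pd_simps expdefs circ_def bil_simps; simp add: algebra_simps)

lemma cp_fst:
  "fst (circ2 s p (x,a) (circ1 s p (y,b) (z,d)) + circ1 s p (x,a) (circ2 s p (y,b) (z,d))
     - circ2 s p (circ1 s p (x,a) (y,b)) (z,d) - circ1 s p (circ2 s p (x,a) (y,b)) (z,d)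
     - circ2 s p (y,b) (circ1 s p (x,a) (z,d)) - circ1 s p (y,b) (circ2 s p (x,a) (z,d)))
   = Lc s p x y z + Lc s p x y z"
  by (simp add: circ1_def circ2_def expdefs circ_def bil_simps; simp add: algebra_simps)

lemma l1_snd:
  "pair (snd (circ1 s p (x,a) (circ1 s p (y,b) (z,d)) - (circ1 s p (circ1 s p (x,a) (y,b)) (z,d)
     + circ1 s p (y,b) (circ1 s p (x,a) (z,d))))) v
   = pair d (L1d s p x y v) + pair b (L1b s p x z v) + pair a (L1a s p y z v)"
  by (simp add: circ1_def pd_simps expdefs circ_def bil_simps; simp add: algebra_simps)

lemma l2_snd:
  "pair (snd (circ2 s p (x,a) (circ2 s p (y,b) (z,d)) - (circ2 s p (circ2 s p (x,a) (y,b)) (z,d)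
     + circ2 s p (y,b) (circ2 s p (x,a) (z,d))))) v
   = pair d (L2d s p x y v) + pair b (L2b s p x z v) + pair a (L2a s p y z v)"
  by (simp add: circ2_def pd_simps expdefs circ_def bil_simps; simp add: algebra_simps)

lemma l1_fst:
  "fst (circ1 s p (x,a) (circ1 s p (y,b) (z,d)) - (circ1 s p (circ1 s p (x,a) (y,b)) (z,d)
     + circ1 s p (y,b) (circ1 s p (x,a) (z,d)))) = Lc s p x y z"
  by (simp add: circ1_def expdefs circ_def bil_simps; simp add: algebra_simps)

lemma l2_fst:
  "fst (circ2 s p (x,a) (circ2 s p (y,b) (z,d)) - (circ2 s p (circ2 s p (x,a) (y,b)) (z,d)
     + circ2 s p (y,b) (circ2 s p (x,a) (z,d)))) = Lc s p x y z"
  by (simp add: circ2_def expdefs circ_def bil_simps; simp add: algebra_simps)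

end

locale apl = bil +
  assumes a1: "AL1 s p" and a2: "AL2 s p" and a3: "AL3 s p" and a4: "AL4 s p"
begin

lemma al_zero: "al1 s p x y z = 0" "al2 s p x y z = 0" "al3 s p x y z = 0" "al4 s p x y z = 0"
  using a1 a2 a3 a4 unfolding AL1_def AL2_def AL3_def AL4_def al1_def al2_def al3_def al4_def right_minus_eq
  by blast+

end

lemma (in apl) Lc_zero: "Lc s p x y z = 0"
proof -
  have "Lc s p x y z = - (al1 s p x y z) + (al1 s p y x z) - (al2 s p x y z) + (al3 s p x y z) - (al3 s p y x z) - (al4 s p x y z)"
    by (simp add: expdefs circ_def bil_simps algebra_simps)
  also have "\<dots> = 0" by (simp add: al_zero)
  finally show ?thesis .
qed

lemma (in apl) L1d_zero: "L1d s p x y v = 0"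
proof -
  have "L1d s p x y v = - (al2 s p x y v)"
    by (simp add: expdefs circ_def bil_simps algebra_simps)
  also have "\<dots> = 0" by (simp add: al_zero)
  finally show ?thesis .
qed

lemma (in apl) L1b_zero: "L1b s p x z v = 0"
proof -
  have "L1b s p x z v = (al2 s p x z v) + (al3 s p v x z)"
    by (simp add: expdefs circ_def bil_simps algebra_simps)
  also have "\<dots> = 0" by (simp add: al_zero)
  finally show ?thesis .
qed

lemma (in apl) L1a_zero: "L1a s p y z v = 0"
proof -
  have "L1a s p y z v = - (al2 s p y z v) - (al3 s p v y z) - (al4 s p z v y)"
    by (simp add: expdefs circ_def bil_simps algebra_simps)
  also have "\<dots> = 0" by (simp add: al_zero)
  finally show ?thesis .
qed

lemma (in apl) L2d_zero: "L2d s p x y v = 0"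
proof -
  have "L2d s p x y v = (al1 s p x y v) - (al1 s p y x v) + (al2 s p x y v) - (al3 s p x y v) + (al3 s p y x v) + (al4 s p x y v)"
    by (simp add: expdefs circ_def bil_simps algebra_simps)
  also have "\<dots> = 0" by (simp add: al_zero)
  finally show ?thesis .
qed

lemma (in apl) L2b_zero: "L2b s p x z v = 0"
proof -
  have "L2b s p x z v = (al1 s p v x z) - (al1 s p x v z) - (al1 s p x z v) + (al1 s p z x v) - (al2 s p x v z) - (al2 s p x z v) - (al3 s p v x z) + (al3 s p x v z) + (al3 s p x z v) - (al3 s p z x v) - (al4 s p x v z) - (al4 s p x z v)"
    by (simp add: expdefs circ_def bil_simps algebra_simps)
  also have "\<dots> = 0" by (simp add: al_zero)
  finally show ?thesis .
qed

lemma (in apl) L2a_zero: "L2a s p y z v = 0"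
proof -
  have "L2a s p y z v = - (al1 s p v y z) - (al1 s p v z y) + (al1 s p y v z) + (al1 s p y z v) - (al1 s p z v y) - (al1 s p z y v) - (al2 s p v z y) + (al2 s p y v z) + (al2 s p y z v) - (al2 s p z v y) + (al3 s p v y z) - (al3 s p y v z) - (al3 s p y z v) + (al3 s p z y v) + (al4 s p y v z) + (al4 s p y z v)"
    by (simp add: expdefs circ_def bil_simps algebra_simps)
  also have "\<dots> = 0" by (simp add: al_zero)
  finally show ?thesis .
qed

lemma (in apl) Dt_zero:
  assumes "AN1 s p" "AN2 s p" "AN3 s p"
  shows "Dt s p x y v = 0"
proof -
  note an = an_zero[OF assms]
  have "Dt s p x y v = - (al1 s p x y v) + (al1 s p y x v) + (al3 s p x y v) - (al3 s p y x v) + (al4 s p x y v) - (an2 s p x y v)"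
    by (simp add: expdefs circ_def bil_simps algebra_simps)
  also have "\<dots> = 0" by (simp add: al_zero an)
  finally show ?thesis .
qed

lemma (in apl) Bt_zero:
  assumes "AN1 s p" "AN2 s p" "AN3 s p"
  shows "Bt s p x z v = 0"
proof -
  note an = an_zero[OF assms]
  have "Bt s p x z v = - (al1 s p x v z) + (al1 s p x z v) - (al1 s p z x v) - (al3 s p v x z) - (al3 s p x z v) + (al3 s p z x v) + (al4 s p x v z) + (al4 s p x v z) - (al4 s p x z v) - (an2 s p x v z) + (an2 s p x z v) + (an3 s p x v z)"
    by (simp add: expdefs circ_def bil_simps algebra_simps)
  also have "\<dots> = 0" by (simp add: al_zero an)
  finally show ?thesis .
qed

lemma (in apl) At_zero:
  assumes "AN1 s p" "AN2 s p" "AN3 s p"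
  shows "At s p y z v = 0"
proof -
  note an = an_zero[OF assms]
  have "At s p y z v = (al1 s p v z y) + (al1 s p y v z) - (al1 s p y z v) + (al1 s p z v y) + (al1 s p z y v) + (al3 s p v y z) + (al3 s p y z v) - (al3 s p z y v) - (al4 s p y v z) - (al4 s p y v z) + (al4 s p y z v) + (al4 s p z v y) + (an1 s p z v y) + (an2 s p y v z) - (an2 s p y z v) - (an3 s p y v z)"
    by (simp add: expdefs circ_def bil_simps algebra_simps)
  also have "\<dots> = 0" by (simp add: al_zero an)
  finally show ?thesis .
qed

lemma (in apl) an1_from:
  assumes D: "\<And>x y v. Dt s p x y v = 0" and B: "\<And>x z v. Bt s p x z v = 0" and A: "\<And>y z v. At s p y z v = 0"
  shows "an1 s p x y z = 0"
proof -
  have "an1 s p x y z = (Bt s p x z y) - (Bt s p y z x) - (Dt s p x y z) + (Dt s p x z y) - (Dt s p y z x) + (al1 s p y x z) + (al1 s p y x z) + (al1 s p y x z) + (al2 s p y x z) + (al3 s p x y z) - (al3 s p y x z) - (al4 s p x y z) - (al4 s p x y z)"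
    by (simp add: expdefs circ_def bil_simps algebra_simps)
  also have "\<dots> = 0" by (simp add: al_zero D B A)
  finally show ?thesis .
qed

lemma (in apl) an2_from:
  assumes D: "\<And>x y v. Dt s p x y v = 0" and B: "\<And>x z v. Bt s p x z v = 0" and A: "\<And>y z v. At s p y z v = 0"
  shows "an2 s p x y z = 0"
proof -
  have "an2 s p x y z = - (Dt s p x y z) - (al1 s p x y z) + (al1 s p y x z) + (al3 s p x y z) - (al3 s p y x z) + (al4 s p x y z)"
    by (simp add: expdefs circ_def bil_simps algebra_simps)
  also have "\<dots> = 0" by (simp add: al_zero D B A)
  finally show ?thesis .
qed

lemma (in apl) an3_from:
  assumes D: "\<And>x y v. Dt s p x y v = 0" and B: "\<And>x z v. Bt s p x z v = 0" and A: "\<And>y z v. At s p y z v = 0"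
  shows "an3 s p x y z = 0"
proof -
  have "an3 s p x y z = (Bt s p x z y) - (Dt s p x y z) + (Dt s p x z y) + (al1 s p y x z) + (al3 s p x y z) - (al4 s p x y z)"
    by (simp add: expdefs circ_def bil_simps algebra_simps)
  also have "\<dots> = 0" by (simp add: al_zero D B A)
  finally show ?thesis .
qed
lemma pair_zero2 [simp]: "pair a 0 = 0"
  by (simp add: pair_def)

context bil
begin

lemma cp_zero_parts:
  assumes HC: "\<And>X Y Z. circ2 s p X (circ1 s p Y Z) + circ1 s p X (circ2 s p Y Z) - circ2 s p (circ1 s p X Y) Z
     - circ1 s p (circ2 s p X Y) Z - circ2 s p Y (circ1 s p X Z) - circ1 s p Y (circ2 s p X Z) = 0"
  shows "Dt s p x y v = 0" "Bt s p x z v = 0" "At s p y z v = 0"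
proof -
  show "Dt s p x y v = 0"
  proof (rule vec_ext)
    fix d
    have "pair (snd (circ2 s p (x,0) (circ1 s p (y,0) (0,d)) + circ1 s p (x,0) (circ2 s p (y,0) (0,d))
     - circ2 s p (circ1 s p (x,0) (y,0)) (0,d) - circ1 s p (circ2 s p (x,0) (y,0)) (0,d)
     - circ2 s p (y,0) (circ1 s p (x,0) (0,d)) - circ1 s p (y,0) (circ2 s p (x,0) (0,d)))) v = pair 0 v"
      by (simp only: HC snd_zero)
    then show "pair d (Dt s p x y v) = pair d 0" by (simp only: cp_snd) simp
  qed
  show "Bt s p x z v = 0"
  proof (rule vec_ext)
    fix b
    have "pair (snd (circ2 s p (x,0) (circ1 s p (0,b) (z,0)) + circ1 s p (x,0) (circ2 s p (0,b) (z,0))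
     - circ2 s p (circ1 s p (x,0) (0,b)) (z,0) - circ1 s p (circ2 s p (x,0) (0,b)) (z,0)
     - circ2 s p (0,b) (circ1 s p (x,0) (z,0)) - circ1 s p (0,b) (circ2 s p (x,0) (z,0)))) v = pair 0 v"
      by (simp only: HC snd_zero)
    then show "pair b (Bt s p x z v) = pair b 0" by (simp only: cp_snd) simp
  qed
  show "At s p y z v = 0"
  proof (rule vec_ext)
    fix a
    have "pair (snd (circ2 s p (0,a) (circ1 s p (y,0) (z,0)) + circ1 s p (0,a) (circ2 s p (y,0) (z,0))
     - circ2 s p (circ1 s p (0,a) (y,0)) (z,0) - circ1 s p (circ2 s p (0,a) (y,0)) (z,0)
     - circ2 s p (y,0) (circ1 s p (0,a) (z,0)) - circ1 s p (y,0) (circ2 s p (0,a) (z,0)))) v = pair 0 v"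
      by (simp only: HC snd_zero)
    then show "pair a (At s p y z v) = pair a 0" by (simp only: cp_snd) simp
  qed
qed

end

context apl
begin

lemma leib1: "leibniz (circ1 s p)"
  unfolding leibniz_def
proof (intro allI)
  fix X Y Z
  let ?E = "circ1 s p X (circ1 s p Y Z) - (circ1 s p (circ1 s p X Y) Z + circ1 s p Y (circ1 s p X Z))"
  obtain x a y b z d where X: "X = (x,a)" and Y: "Y = (y,b)" and Z: "Z = (z,d)"
    by (metis prod.exhaust)
  have f: "fst ?E = 0" unfolding X Y Z by (simp only: l1_fst Lc_zero)
  have sn: "snd ?E = 0"
  proof (rule dual_ext)
    fix v show "pair (snd ?E) v = pair 0 v"
      unfolding X Y Z by (simp only: l1_snd L1d_zero L1b_zero L1a_zero) simp
  qed
  have "?E = 0" using f sn by (simp add: prod_eq_iff)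
  then show "circ1 s p X (circ1 s p Y Z) = circ1 s p (circ1 s p X Y) Z + circ1 s p Y (circ1 s p X Z)"
    by (simp only: right_minus_eq)
qed

lemma leib2: "leibniz (circ2 s p)"
  unfolding leibniz_def
proof (intro allI)
  fix X Y Z
  let ?E = "circ2 s p X (circ2 s p Y Z) - (circ2 s p (circ2 s p X Y) Z + circ2 s p Y (circ2 s p X Z))"
  obtain x a y b z d where X: "X = (x,a)" and Y: "Y = (y,b)" and Z: "Z = (z,d)"
    by (metis prod.exhaust)
  have f: "fst ?E = 0" unfolding X Y Z by (simp only: l2_fst Lc_zero)
  have sn: "snd ?E = 0"
  proof (rule dual_ext)
    fix v show "pair (snd ?E) v = pair 0 v"
      unfolding X Y Z by (simp only: l2_snd L2d_zero L2b_zero L2a_zero) simp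
  qed
  have "?E = 0" using f sn by (simp add: prod_eq_iff)
  then show "circ2 s p X (circ2 s p Y Z) = circ2 s p (circ2 s p X Y) Z + circ2 s p Y (circ2 s p X Z)"
    by (simp only: right_minus_eq)
qed

lemma compat:
  assumes "AN1 s p" "AN2 s p" "AN3 s p"
  shows "compatible_leibniz (circ1 s p) (circ2 s p)"
  unfolding compatible_leibniz_def
proof (intro conjI leib1 leib2 allI)
  fix X Y Z
  let ?E = "circ2 s p X (circ1 s p Y Z) + circ1 s p X (circ2 s p Y Z) - circ2 s p (circ1 s p X Y) Z
     - circ1 s p (circ2 s p X Y) Z - circ2 s p Y (circ1 s p X Z) - circ1 s p Y (circ2 s p X Z)"
  obtain x a y b z d where X: "X = (x,a)" and Y: "Y = (y,b)" and Z: "Z = (z,d)"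
    by (metis prod.exhaust)
  have f: "fst ?E = 0" unfolding X Y Z by (simp only: cp_fst Lc_zero) simp
  have sn: "snd ?E = 0"
  proof (rule dual_ext)
    fix v show "pair (snd ?E) v = pair 0 v"
      unfolding X Y Z by (simp only: cp_snd Dt_zero[OF assms] Bt_zero[OF assms] At_zero[OF assms]) simp
  qed
  show "?E = 0" using f sn by (simp add: prod_eq_iff)
qed

lemma an_from_compat:
  assumes "compatible_leibniz (circ1 s p) (circ2 s p)"
  shows "AN1 s p" "AN2 s p" "AN3 s p"
proof -
  have HC: "\<And>X Y Z. circ2 s p X (circ1 s p Y Z) + circ1 s p X (circ2 s p Y Z) - circ2 s p (circ1 s p X Y) Z
     - circ1 s p (circ2 s p X Y) Z - circ2 s p Y (circ1 s p X Z) - circ1 s p Y (circ2 s p X Z) = 0"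
    using assms unfolding compatible_leibniz_def by blast
  note P = cp_zero_parts[OF HC]
  have "\<And>x y z. an1 s p x y z = 0" "\<And>x y z. an2 s p x y z = 0" "\<And>x y z. an3 s p x y z = 0"
    by (rule an1_from an2_from an3_from; rule P)+
  then show "AN1 s p" "AN2 s p" "AN3 s p" by (rule an_intro)+
qed

end

theorem proposition3p8:
  fixes succ prec :: "('k::field_char_0, 'n::finite) vect \<Rightarrow> ('k,'n) vect \<Rightarrow> ('k,'n) vect"
  assumes "anti_pre_leibniz succ prec"
  shows "compatible_leibniz (circ1 succ prec) (circ2 succ prec) \<longleftrightarrow>
         admissible_novikov_dialgebra succ prec"
proof -
  have bs: "bilinear_mult succ" and bp: "bilinear_mult prec" and a1: "AL1 succ prec"
    and a2: "AL2 succ prec" and a3: "AL3 succ prec" and a4: "AL4 succ prec"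
    using assms unfolding anti_pre_leibniz_def by auto
  interpret apl succ prec
    by (rule apl.intro[OF bil.intro[OF bs bp] apl_axioms.intro[OF a1 a2 a3 a4]])
  show ?thesis
  proof
    assume H: "compatible_leibniz (circ1 succ prec) (circ2 succ prec)"
    show "admissible_novikov_dialgebra succ prec"
      unfolding admissible_novikov_dialgebra_def
      using bs bp a2 a3 a4 an_from_compat[OF H] by blast
  next
    assume "admissible_novikov_dialgebra succ prec"
    then have "AN1 succ prec" "AN2 succ prec" "AN3 succ prec"
      unfolding admissible_novikov_dialgebra_def by auto
    then show "compatible_leibniz (circ1 succ prec) (circ2 succ prec)" by (rule compat)
  qed
qed

end
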